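(* Let $p$ be a prime and let $G$ be a group of order $p^7$ and nilpotency class $4$ such that $\gamma_2(G)$ is elementary abelian of order $p^5$ (so that $\operatorname{Z}(G) = \gamma_4(G)$ has order $p^2$). Suppose $G = \langle \alpha_1, \alpha_2\rangle$, and put $\beta = [\alpha_1,\alpha_2]$, $\beta_i = [\beta,\alpha_i]$ and $\eta_{ij} = [\beta_i,\alpha_j]$ for $i,j \in \{1,2\}$. Assume that $\gamma_4(G) = \langle \eta_{11}, \eta_{12}\rangle$ and that $\eta_{22} = \eta_{11}^m \eta_{12}^n$ for some $m, n \in \mathbb{F}_p$, not both zero. Then $G$ admits a subgroup $H \leq \operatorname{Z}(G)$ of order $p$ with $|\operatorname{Z}(G/H)| = p^2$ if and only if the equation $m\lambda^2 + n\lambda\mu - \mu^2 = 0$ has a solution $(\lambda,\mu) = (\lambda_0,\mu_0) \in \mathbb{F}_p^2$ with $\lambda_0 \neq 0$.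
   Context: For a group $G$, $[x,y] = x^{-1}y^{-1}xy$; $\gamma_i(G)$ is the $i$-th term of the lower central series and $\operatorname{Z}(G)$ the center. $\mathbb{F}_p$ is the field with $p$ elements; exponents in $\mathbb{F}_p$ are interpreted via integer representatives (well defined since $\gamma_4(G)$ has exponent $p$). *)

theory Defs
  imports "HOL-Algebra.Algebra"
begin

definition grp_comm :: "('a, 'b) monoid_scheme \<Rightarrow> 'a \<Rightarrow> 'a \<Rightarrow> 'a" where
  "grp_comm G x y = inv\<^bsub>G\<^esub> x \<otimes>\<^bsub>G\<^esub> inv\<^bsub>G\<^esub> y \<otimes>\<^bsub>G\<^esub> x \<otimes>\<^bsub>G\<^esub> y"

definition comm_subgroup :: "('a, 'b) monoid_scheme \<Rightarrow> 'a set \<Rightarrow> 'a set \<Rightarrow> 'a set" where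
  "comm_subgroup G A B = generate G {grp_comm G a b | a b. a \<in> A \<and> b \<in> B}"

text \<open>Lower central series, indexed from 1: gamma 1 = G, gamma (i+1) = [gamma i, G].
  (gamma 0 is also set to G, by convention.)\<close>
fun lower_central :: "('a, 'b) monoid_scheme \<Rightarrow> nat \<Rightarrow> 'a set" where
  "lower_central G 0 = carrier G"
| "lower_central G (Suc 0) = carrier G"
| "lower_central G (Suc (Suc i)) = comm_subgroup G (lower_central G (Suc i)) (carrier G)"

definition grp_center :: "('a, 'b) monoid_scheme \<Rightarrow> 'a set" where
  "grp_center G = {z \<in> carrier G. \<forall>g \<in> carrier G. z \<otimes>\<^bsub>G\<^esub> g = g \<otimes>\<^bsub>G\<^esub> z}"

definition nilpotency_class :: "('a, 'b) monoid_scheme \<Rightarrow> nat \<Rightarrow> bool" where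
  "nilpotency_class G c \<longleftrightarrow> lower_central G (Suc c) = {\<one>\<^bsub>G\<^esub>} \<and> lower_central G c \<noteq> {\<one>\<^bsub>G\<^esub>}"

definition elem_abelian :: "('a, 'b) monoid_scheme \<Rightarrow> nat \<Rightarrow> 'a set \<Rightarrow> bool" where
  "elem_abelian G p H \<longleftrightarrow> subgroup H G \<and>
     (\<forall>x \<in> H. \<forall>y \<in> H. x \<otimes>\<^bsub>G\<^esub> y = y \<otimes>\<^bsub>G\<^esub> x) \<and>
     (\<forall>x \<in> H. x [^]\<^bsub>G\<^esub> p = \<one>\<^bsub>G\<^esub>)"

end

theory Submission
  imports Defs
begin
context group begin
abbreviation cm where "cm x y \<equiv> grp_comm G x y"
lemma cancel1[simp]: "x \<in> carrier G \<Longrightarrow> y \<in> carrier G \<Longrightarrow> x \<otimes> (inv x \<otimes> y) = y"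
  by (simp flip: m_assoc)
lemma cancel2[simp]: "x \<in> carrier G \<Longrightarrow> y \<in> carrier G \<Longrightarrow> inv x \<otimes> (x \<otimes> y) = y"
  by (simp flip: m_assoc)
lemma cm_closed[simp]: "x \<in> carrier G \<Longrightarrow> y \<in> carrier G \<Longrightarrow> cm x y \<in> carrier G"
  by (simp add: grp_comm_def)
lemma conj_cm: "x \<in> carrier G \<Longrightarrow> g \<in> carrier G \<Longrightarrow> inv g \<otimes> x \<otimes> g = x \<otimes> cm x g"
  by (simp add: grp_comm_def m_assoc)
lemma C1: "x \<in> carrier G \<Longrightarrow> y \<in> carrier G \<Longrightarrow> z \<in> carrier G \<Longrightarrow>
  cm (x \<otimes> y) z = (inv y \<otimes> cm x z \<otimes> y) \<otimes> cm y z"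
  by (simp add: grp_comm_def m_assoc inv_mult_group)
lemma C2: "x \<in> carrier G \<Longrightarrow> y \<in> carrier G \<Longrightarrow> z \<in> carrier G \<Longrightarrow>
  cm x (y \<otimes> z) = cm x z \<otimes> (inv z \<otimes> cm x y \<otimes> z)"
  by (simp add: grp_comm_def m_assoc inv_mult_group)
lemma cm_one_iff: "x \<in> carrier G \<Longrightarrow> y \<in> carrier G \<Longrightarrow> cm x y = \<one> \<longleftrightarrow> x \<otimes> y = y \<otimes> x"
proof -
  assume x: "x \<in> carrier G" and y: "y \<in> carrier G"
  have "cm x y = inv (y \<otimes> x) \<otimes> (x \<otimes> y)" using x y by (simp add: grp_comm_def m_assoc inv_mult_group)
  also have "\<dots> = \<one> \<longleftrightarrow> x \<otimes> y = (y \<otimes> x) \<otimes> \<one>" using x y by (simp only: inv_solve_left' one_closed m_closed)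
  finally show ?thesis using x y by simp
qed
lemma cm_inv: "x \<in> carrier G \<Longrightarrow> y \<in> carrier G \<Longrightarrow> inv (cm x y) = cm y x"
  by (simp add: grp_comm_def m_assoc inv_mult_group)
end


lemma (in group) fin_submonoid_subgroup:
  assumes fin: "finite (carrier G)" and M: "M \<subseteq> carrier G" "\<one> \<in> M"
    and mul: "\<And>x y. x \<in> M \<Longrightarrow> y \<in> M \<Longrightarrow> x \<otimes> y \<in> M"
  shows "subgroup M G"
proof -
  have pw: "x [^] (k::nat) \<in> M" if "x \<in> M" for x k
    using that M(2) by (induction k) (auto intro: mul)
  have "inv x \<in> M" if x: "x \<in> M" for x
  proof -
    have xc: "x \<in> carrier G" using x M by auto
    have o: "order G \<ge> 1" using fin unfolding order_def
      by (metis One_nat_def Suc_leI card_gt_0_iff empty_iff one_closed)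
    have "x [^] (order G - 1) \<otimes> x = \<one>"
      using pow_order_eq_1[OF xc] o xc
      by (metis Suc_diff_1 less_le_trans nat_pow_Suc zero_less_one)
    hence "inv x = x [^] (order G - 1)"
      using xc by (metis inv_equality nat_pow_closed)
    thus ?thesis using pw x by simp
  qed
  thus ?thesis using M mul by (auto intro!: subgroupI)
qed

lemma (in group) fin_generate_sub:
  assumes fin: "finite (carrier G)" and M: "M \<subseteq> carrier G" "\<one> \<in> M"
    and mul: "\<And>x y. x \<in> M \<Longrightarrow> y \<in> M \<Longrightarrow> x \<otimes> y \<in> M" and S: "S \<subseteq> M"
  shows "generate G S \<subseteq> M"
  by (rule generate_subgroup_incl[OF S fin_submonoid_subgroup[OF assms(1-4)]])

locale L = group G for G (structure) +
  fixes p :: nat and a1 a2 :: 'a and m n :: nat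
  assumes pp: "Factorial_Ring.prime p" and fin: "finite (carrier G)"
    and cardG: "card (carrier G) = p ^ 7"
    and g5: "lower_central G 5 = {\<one>}"
    and el: "elem_abelian G p (lower_central G 2)"
    and c2: "card (lower_central G 2) = p ^ 5"
    and a1: "a1 \<in> carrier G" and a2: "a2 \<in> carrier G"
    and gen: "generate G {a1, a2} = carrier G"
    and g4: "lower_central G 4 =
           generate G {grp_comm G (grp_comm G (grp_comm G a1 a2) a1) a1,
                       grp_comm G (grp_comm G (grp_comm G a1 a2) a1) a2}"
    and mp: "m < p" and np: "n < p"
    and e22: "grp_comm G (grp_comm G (grp_comm G a1 a2) a2) a2 =
           grp_comm G (grp_comm G (grp_comm G a1 a2) a1) a1 [^] m \<otimes>
           grp_comm G (grp_comm G (grp_comm G a1 a2) a1) a2 [^] n"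
begin

abbreviation "Q \<equiv> lower_central G 2"
abbreviation "bb \<equiv> cm a1 a2"
abbreviation "b1 \<equiv> cm bb a1"
abbreviation "b2 \<equiv> cm bb a2"
abbreviation "e11 \<equiv> cm b1 a1"
abbreviation "e12 \<equiv> cm b1 a2"
abbreviation "e21 \<equiv> cm b2 a1"
abbreviation "e22 \<equiv> cm b2 a2"

lemma p_gt1: "p > 1" using pp prime_gt_1_nat by blast

lemma Q_def': "Q = generate G {cm x y | x y. x \<in> carrier G \<and> y \<in> carrier G}"
  by (simp add: numeral_2_eq_2 comm_subgroup_def)

lemma Q_sub: "subgroup Q G" using el unfolding elem_abelian_def by blast
lemma Q_car: "x \<in> Q \<Longrightarrow> x \<in> carrier G" by (rule subgroup.mem_carrier[OF Q_sub])
lemma Qc: "x \<in> Q \<Longrightarrow> y \<in> Q \<Longrightarrow> x \<otimes> y = y \<otimes> x" using el unfolding elem_abelian_def by simp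
lemma Qp: "x \<in> Q \<Longrightarrow> x [^] p = \<one>" using el unfolding elem_abelian_def by simp
lemma Q_mul: "x \<in> Q \<Longrightarrow> y \<in> Q \<Longrightarrow> x \<otimes> y \<in> Q" by (rule subgroup.m_closed[OF Q_sub])
lemma Q_one: "\<one> \<in> Q" by (rule subgroup.one_closed[OF Q_sub])
lemma Q_inv: "x \<in> Q \<Longrightarrow> inv x \<in> Q" by (rule subgroup.m_inv_closed[OF Q_sub])
lemma Q_pow: "x \<in> Q \<Longrightarrow> x [^] (k::nat) \<in> Q" by (induction k) (auto simp: Q_one Q_mul)
lemma cm_Q: "x \<in> carrier G \<Longrightarrow> y \<in> carrier G \<Longrightarrow> cm x y \<in> Q"
  unfolding Q_def' by (rule generate.incl) blast

lemma Qlc: "x \<in> Q \<Longrightarrow> y \<in> Q \<Longrightarrow> z \<in> carrier G \<Longrightarrow> x \<otimes> (y \<otimes> z) = y \<otimes> (x \<otimes> z)"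
  by (simp add: Q_car Qc flip: m_assoc)

lemma g4_car: "lower_central G 4 \<subseteq> carrier G"
  unfolding g4 by (rule generate_incl) (simp add: a1 a2)

lemma g5': "lower_central G 5 = comm_subgroup G (lower_central G 4) (carrier G)"
  by (simp add: numeral_eq_Suc)

lemma g4_central: "z \<in> lower_central G 4 \<Longrightarrow> g \<in> carrier G \<Longrightarrow> z \<otimes> g = g \<otimes> z"
proof -
  assume z: "z \<in> lower_central G 4" and g: "g \<in> carrier G"
  have "cm z g \<in> lower_central G 5" unfolding g5' comm_subgroup_def
    by (rule generate.incl) (use z g in blast)
  hence "cm z g = \<one>" using g5 by simp
  thus ?thesis using cm_one_iff z g g4_car by blast
qed

definition "cent x \<longleftrightarrow> x \<in> carrier G \<and> (\<forall>g\<in>carrier G. x \<otimes> g = g \<otimes> x)"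

lemma cent_mul: "cent x \<Longrightarrow> cent y \<Longrightarrow> cent (x \<otimes> y)"
proof -
  assume x: "cent x" and y: "cent y"
  have xc: "x \<in> carrier G" and yc: "y \<in> carrier G" using x y cent_def by auto
  have "x \<otimes> y \<otimes> g = g \<otimes> (x \<otimes> y)" if g: "g \<in> carrier G" for g
  proof -
    have "x \<otimes> y \<otimes> g = x \<otimes> (g \<otimes> y)" using y g xc yc cent_def by (simp add: m_assoc)
    also have "\<dots> = (x \<otimes> g) \<otimes> y" using g xc yc by (simp add: m_assoc)
    also have "\<dots> = g \<otimes> (x \<otimes> y)" using x g xc yc cent_def by (simp add: m_assoc)
    finally show ?thesis .
  qed
  thus ?thesis using xc yc cent_def by simp
qed
lemma cent_one: "cent \<one>" unfolding cent_def by simp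
lemma cent_pow: "cent x \<Longrightarrow> cent (x [^] (k::nat))"
  by (induction k) (auto simp: cent_one cent_mul)
lemma cent_cm: "cent x \<Longrightarrow> g \<in> carrier G \<Longrightarrow> cm x g = \<one>"
  unfolding cent_def using cm_one_iff by blast

lemma bb_car[simp]: "bb \<in> carrier G" and b1_car[simp]: "b1 \<in> carrier G" and b2_car[simp]: "b2 \<in> carrier G"
  and e11_car[simp]: "e11 \<in> carrier G" and e12_car[simp]: "e12 \<in> carrier G"
  by (simp_all add: a1 a2)
lemma bbQ: "bb \<in> Q" and b1Q: "b1 \<in> Q" and b2Q: "b2 \<in> Q" and e11Q: "e11 \<in> Q" and e12Q: "e12 \<in> Q"
  and e21Q: "e21 \<in> Q" and e22Q: "e22 \<in> Q"
  by (simp_all add: cm_Q a1 a2)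

lemma e11_cent: "cent e11" and e12_cent: "cent e12"
  unfolding cent_def by (auto simp: a1 a2 g4 intro!: g4_central generate.incl)

lemma e22_cent: "cent e22" unfolding e22 by (intro cent_mul cent_pow e11_cent e12_cent)

end

context L begin

lemma conj_Q: "c \<in> Q \<Longrightarrow> g \<in> carrier G \<Longrightarrow> inv g \<otimes> c \<otimes> g \<in> Q"
  by (simp add: conj_cm Q_car Q_mul cm_Q)

lemma cmQ_hom: "c \<in> Q \<Longrightarrow> d \<in> Q \<Longrightarrow> g \<in> carrier G \<Longrightarrow> cm (c \<otimes> d) g = cm c g \<otimes> cm d g"
proof -
  assume c: "c \<in> Q" and d: "d \<in> Q" and g: "g \<in> carrier G"
  have "inv d \<otimes> cm c g \<otimes> d = cm c g"
    using Qc[OF cm_Q[OF Q_car[OF c] g] d] c d g Q_car by (simp add: m_assoc)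
  thus ?thesis using C1[OF Q_car[OF c] Q_car[OF d] g] by simp
qed

lemma cmQ_pow: "c \<in> Q \<Longrightarrow> g \<in> carrier G \<Longrightarrow> cm (c [^] (k::nat)) g = (cm c g) [^] k"
proof (induction k)
  case 0 then show ?case by (simp add: grp_comm_def m_assoc)
next
  case (Suc k) then show ?case by (simp add: cmQ_hom Q_pow Q_car nat_pow_Suc)
qed

lemma conj_mult: "x \<in> carrier G \<Longrightarrow> y \<in> carrier G \<Longrightarrow> g \<in> carrier G \<Longrightarrow>
   inv g \<otimes> (x \<otimes> y) \<otimes> g = (inv g \<otimes> x \<otimes> g) \<otimes> (inv g \<otimes> y \<otimes> g)"
  by (simp add: m_assoc)

lemma metab: "c \<in> Q \<Longrightarrow> x \<in> carrier G \<Longrightarrow> y \<in> carrier G \<Longrightarrow> cm (cm c x) y = cm (cm c y) x"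
proof -
  assume c: "c \<in> Q" and x: "x \<in> carrier G" and y: "y \<in> carrier G"
  have cc: "c \<in> carrier G" using c Q_car by blast
  have xy: "x \<otimes> y = y \<otimes> x \<otimes> cm x y" using x y by (simp add: grp_comm_def m_assoc)
  define d where "d = inv (y \<otimes> x) \<otimes> c \<otimes> (y \<otimes> x)"
  have dQ: "d \<in> Q" unfolding d_def using conj_Q c x y by simp
  have "inv (x \<otimes> y) \<otimes> c \<otimes> (x \<otimes> y) = inv (cm x y) \<otimes> d \<otimes> cm x y"
    unfolding xy d_def using x y cc by (simp add: m_assoc inv_mult_group)
  also have "\<dots> = d" using Qc[OF dQ cm_Q[OF x y]] dQ Q_car x y by (simp add: m_assoc)
  finally have eq: "inv (x \<otimes> y) \<otimes> c \<otimes> (x \<otimes> y) = inv (y \<otimes> x) \<otimes> c \<otimes> (y \<otimes> x)"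
    unfolding d_def .
  have L: "inv (x \<otimes> y) \<otimes> c \<otimes> (x \<otimes> y) = c \<otimes> (cm c y \<otimes> (cm c x \<otimes> cm (cm c x) y))"
  proof -
    have "inv (x \<otimes> y) \<otimes> c \<otimes> (x \<otimes> y) = inv y \<otimes> (inv x \<otimes> c \<otimes> x) \<otimes> y"
      using x y cc by (simp add: m_assoc inv_mult_group)
    also have "\<dots> = inv y \<otimes> (c \<otimes> cm c x) \<otimes> y" using conj_cm cc x by simp
    also have "\<dots> = (c \<otimes> cm c y) \<otimes> (cm c x \<otimes> cm (cm c x) y)"
      using conj_mult conj_cm cc x y by simp
    finally show ?thesis using cc x y by (simp add: m_assoc)
  qed
  have R: "inv (y \<otimes> x) \<otimes> c \<otimes> (y \<otimes> x) = c \<otimes> (cm c y \<otimes> (cm c x \<otimes> cm (cm c y) x))"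
  proof -
    have "inv (y \<otimes> x) \<otimes> c \<otimes> (y \<otimes> x) = inv x \<otimes> (inv y \<otimes> c \<otimes> y) \<otimes> x"
      using x y cc by (simp add: m_assoc inv_mult_group)
    also have "\<dots> = inv x \<otimes> (c \<otimes> cm c y) \<otimes> x" using conj_cm cc y by simp
    also have "\<dots> = (c \<otimes> cm c x) \<otimes> (cm c y \<otimes> cm (cm c y) x)"
      using conj_mult conj_cm cc x y by simp
    also have "\<dots> = c \<otimes> (cm c y \<otimes> (cm c x \<otimes> cm (cm c y) x))"
      using cc x y Qlc[OF cm_Q[OF cc x] cm_Q[OF cc y]] by (simp add: m_assoc)
    finally show ?thesis .
  qed
  show ?thesis using eq L R cc x y by simp
qed

lemma e21_eq: "e21 = e12"
  using metab[OF bbQ a2 a1] by simp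

definition E :: "nat \<Rightarrow> nat \<Rightarrow> nat \<Rightarrow> nat \<Rightarrow> nat \<Rightarrow> 'a" where
  "E k i j a b = bb [^] k \<otimes> (b1 [^] i \<otimes> (b2 [^] j \<otimes> (e11 [^] a \<otimes> e12 [^] b)))"

lemma E_Q: "E k i j a b \<in> Q"
  unfolding E_def by (intro Q_mul Q_pow bbQ b1Q b2Q e11Q e12Q)
lemma E_car[simp]: "E k i j a b \<in> carrier G" using E_Q Q_car by blast

lemma swapQ: "x \<in> Q \<Longrightarrow> y \<in> Q \<Longrightarrow> x' \<in> Q \<Longrightarrow> y' \<in> Q \<Longrightarrow>
   (x \<otimes> y) \<otimes> (x' \<otimes> y') = (x \<otimes> x') \<otimes> (y \<otimes> y')"
  by (simp add: m_assoc Q_car Qlc)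

lemma E_mult: "E k i j a b \<otimes> E k' i' j' a' b' = E (k+k') (i+i') (j+j') (a+a') (b+b')"
  unfolding E_def
  using e11Q e12Q Q_car
  by (simp add: swapQ Q_mul Q_pow bbQ b1Q b2Q e11Q e12Q nat_pow_mult)

lemma E_0: "E 0 0 0 0 0 = \<one>" unfolding E_def by simp

lemma E_pow: "E k i j a b [^] (c::nat) = E (c*k) (c*i) (c*j) (c*a) (c*b)"
  by (induction c) (simp_all add: E_0 E_mult add.commute)

lemma powQ_mod: "x \<in> Q \<Longrightarrow> x [^] (k::nat) = x [^] (k mod p)"
proof -
  assume x: "x \<in> Q"
  have "x [^] k = x [^] (p * (k div p)) \<otimes> x [^] (k mod p)"
    using x Q_car by (simp add: nat_pow_mult)
  also have "x [^] (p * (k div p)) = \<one>" using x Q_car Qp by (simp add: nat_pow_pow[symmetric])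
  finally show ?thesis using x Q_car by simp
qed

lemma E_mod: "E k i j a b = E (k mod p) (i mod p) (j mod p) (a mod p) (b mod p)"
  unfolding E_def using powQ_mod bbQ b1Q b2Q e11Q e12Q by metis

lemma E_cong: "k mod p = k' mod p \<Longrightarrow> i mod p = i' mod p \<Longrightarrow> j mod p = j' mod p \<Longrightarrow>
   a mod p = a' mod p \<Longrightarrow> b mod p = b' mod p \<Longrightarrow> E k i j a b = E k' i' j' a' b'"
  by (metis E_mod)

lemma E_inv: "inv (E k i j a b) = E ((p-1)*k) ((p-1)*i) ((p-1)*j) ((p-1)*a) ((p-1)*b)"
proof -
  obtain q where q: "p = Suc q" using p_gt1 by (cases p) auto
  have pk: "(p - Suc 0)*x + x = p*x" for x::nat unfolding q by simp
  have "E ((p-1)*k) ((p-1)*i) ((p-1)*j) ((p-1)*a) ((p-1)*b) \<otimes> E k i j a b = \<one>"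
  proof -
    have "E ((p-1)*k) ((p-1)*i) ((p-1)*j) ((p-1)*a) ((p-1)*b) \<otimes> E k i j a b
       = E (p*k) (p*i) (p*j) (p*a) (p*b)"
      by (simp add: E_mult pk)
    also have "\<dots> = E 0 0 0 0 0" by (rule E_cong) simp_all
    finally show ?thesis by (simp add: E_0)
  qed
  thus ?thesis using inv_equality by simp
qed

end

context L begin

lemma Ebb: "bb [^] k = E k 0 0 0 0" and Eb1: "b1 [^] k = E 0 k 0 0 0" and Eb2: "b2 [^] k = E 0 0 k 0 0"
  and Ee11: "e11 [^] k = E 0 0 0 k 0" and Ee12: "e12 [^] k = E 0 0 0 0 k"
  by (simp_all add: E_def)

lemma cm_e11: "g \<in> carrier G \<Longrightarrow> cm e11 g = \<one>" using cent_cm e11_cent by blast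
lemma cm_e12: "g \<in> carrier G \<Longrightarrow> cm e12 g = \<one>" using cent_cm e12_cent by blast

lemma e22E: "e22 = E 0 0 0 m n"
  unfolding e22 by (simp add: Ee11 Ee12 E_mult)

lemma E_cm1: "cm (E k i j a b) a1 = E 0 k 0 i j"
proof -
  have "cm (E k i j a b) a1 = b1 [^] k \<otimes> (e11 [^] i \<otimes> (e21 [^] j \<otimes> (\<one> [^] a \<otimes> \<one> [^] b)))"
    unfolding E_def
    by (simp add: cmQ_hom cmQ_pow Q_mul Q_pow bbQ b1Q b2Q e11Q e12Q a1 cm_e11 cm_e12 del: nat_pow_one)
  also have "\<dots> = E 0 k 0 i j" unfolding e21_eq by (simp add: Eb1 Ee11 Ee12 E_mult)
  finally show ?thesis .
qed

lemma E_cm2: "cm (E k i j a b) a2 = E 0 0 k (m*j) (i+n*j)"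
proof -
  have "cm (E k i j a b) a2 = b2 [^] k \<otimes> (e12 [^] i \<otimes> (e22 [^] j \<otimes> (\<one> [^] a \<otimes> \<one> [^] b)))"
    unfolding E_def
    by (simp add: cmQ_hom cmQ_pow Q_mul Q_pow bbQ b1Q b2Q e11Q e12Q a2 cm_e11 cm_e12 del: nat_pow_one)
  also have "\<dots> = E 0 0 k (m*j) (i+n*j)" unfolding e22E
    by (simp add: Eb2 Ee12 E_pow E_mult mult.commute)
  finally show ?thesis .
qed

definition "V = {E k i j a b | k i j a b. True}"

lemma V_car: "V \<subseteq> carrier G" unfolding V_def by auto
lemma V_one: "\<one> \<in> V" unfolding V_def using E_0[symmetric] by blast
lemma V_mul: "x \<in> V \<Longrightarrow> y \<in> V \<Longrightarrow> x \<otimes> y \<in> V"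
proof -
  assume "x \<in> V" "y \<in> V"
  then obtain k i j a b k' i' j' a' b' where "x = E k i j a b" "y = E k' i' j' a' b'" unfolding V_def by blast
  hence "x \<otimes> y = E (k+k') (i+i') (j+j') (a+a') (b+b')" using E_mult by simp
  thus ?thesis unfolding V_def by blast
qed
lemma V_inv: "x \<in> V \<Longrightarrow> inv x \<in> V"
proof -
  assume "x \<in> V"
  then obtain k i j a b where "x = E k i j a b" unfolding V_def by blast
  hence "inv x = E ((p-1)*k) ((p-1)*i) ((p-1)*j) ((p-1)*a) ((p-1)*b)" using E_inv by simp
  thus ?thesis unfolding V_def by blast
qed
lemma V_cm: "x \<in> V \<Longrightarrow> g \<in> {a1, a2} \<Longrightarrow> cm x g \<in> V"
proof -
  assume "x \<in> V" and g: "g \<in> {a1, a2}"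
  then obtain k i j a b where x: "x = E k i j a b" unfolding V_def by blast
  show ?thesis
  proof (cases "g = a1")
    case True
    hence "cm x g = E 0 k 0 i j" using x E_cm1 by simp
    thus ?thesis unfolding V_def by blast
  next
    case False
    hence "cm x g = E 0 0 k (m*j) (i+n*j)" using g x E_cm2 by simp
    thus ?thesis unfolding V_def by blast
  qed
qed

lemma V_normal: "x \<in> V \<Longrightarrow> g \<in> carrier G \<Longrightarrow> inv g \<otimes> x \<otimes> g \<in> V"
proof -
  let ?N = "{g \<in> carrier G. \<forall>x\<in>V. inv g \<otimes> x \<otimes> g \<in> V}"
  have "generate G {a1, a2} \<subseteq> ?N"
  proof (rule fin_generate_sub[OF fin])
    show "\<one> \<in> ?N" using V_car by auto
    show "x \<in> ?N \<Longrightarrow> y \<in> ?N \<Longrightarrow> x \<otimes> y \<in> ?N" for x y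
    proof -
      assume x: "x \<in> ?N" and y: "y \<in> ?N"
      have "inv (x \<otimes> y) \<otimes> v \<otimes> (x \<otimes> y) = inv y \<otimes> (inv x \<otimes> v \<otimes> x) \<otimes> y" if "v \<in> V" for v
        using x y that V_car by (auto simp: m_assoc inv_mult_group)
      thus ?thesis using x y by auto
    qed
    show "{a1, a2} \<subseteq> ?N" using V_cm conj_cm V_car V_mul a1 a2 by auto
  qed auto
  thus "x \<in> V \<Longrightarrow> g \<in> carrier G \<Longrightarrow> inv g \<otimes> x \<otimes> g \<in> V" using gen by auto
qed

lemma all_cm_V: "x \<in> carrier G \<Longrightarrow> y \<in> carrier G \<Longrightarrow> cm x y \<in> V"
proof -
  have D: "generate G {a1, a2} \<subseteq> {y \<in> carrier G. cm x y \<in> V}" if x: "x \<in> carrier G"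
     and h: "cm x a1 \<in> V" "cm x a2 \<in> V" for x
  proof (rule fin_generate_sub[OF fin])
    show "\<one> \<in> {y \<in> carrier G. cm x y \<in> V}" using x V_one by (simp add: grp_comm_def m_assoc)
    show "u \<in> {y \<in> carrier G. cm x y \<in> V} \<Longrightarrow> v \<in> {y \<in> carrier G. cm x y \<in> V} \<Longrightarrow>
          u \<otimes> v \<in> {y \<in> carrier G. cm x y \<in> V}" for u v
      using C2[OF x, of u v] V_normal V_mul by auto
  qed (use h a1 a2 in auto)
  let ?C = "{x \<in> carrier G. \<forall>y \<in> carrier G. cm x y \<in> V}"
  have "generate G {a1, a2} \<subseteq> ?C"
  proof (rule fin_generate_sub[OF fin])
    show "\<one> \<in> ?C" using V_one by (simp add: grp_comm_def m_assoc)
    show "u \<in> ?C \<Longrightarrow> v \<in> ?C \<Longrightarrow> u \<otimes> v \<in> ?C" for u v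
      using C1[of u v] V_normal V_mul by auto
    have "cm a1 a1 = \<one>" "cm a2 a2 = \<one>" using a1 a2 cm_one_iff by auto
    hence "cm a1 a1 \<in> V" "cm a2 a2 \<in> V" using V_one by auto
    moreover have "bb = E 1 0 0 0 0" using Ebb[of 1] by simp
    hence c12: "cm a1 a2 \<in> V" unfolding V_def by blast
    moreover have "cm a2 a1 = inv (cm a1 a2)" using cm_inv a1 a2 by simp
    hence "cm a2 a1 \<in> V" using V_inv c12 by simp
    ultimately show "{a1, a2} \<subseteq> ?C" using D a1 a2 gen by blast
  qed auto
  thus "x \<in> carrier G \<Longrightarrow> y \<in> carrier G \<Longrightarrow> cm x y \<in> V" using gen by auto
qed

lemma Q_V: "Q \<subseteq> V"
  unfolding Q_def' by (rule fin_generate_sub[OF fin V_car V_one V_mul]) (use all_cm_V in auto)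

end

context L begin

lemma V_Q: "V = Q" using Q_V E_Q unfolding V_def by blast

definition "D5 = {..<p} \<times> {..<p} \<times> {..<p} \<times> {..<p} \<times> {..<p}"
definition "Ef = (\<lambda>(k,i,j,a,b). E k i j a b)"

lemma V_img: "V = Ef ` D5"
proof
  show "Ef ` D5 \<subseteq> V" unfolding V_def Ef_def D5_def by auto blast
  show "V \<subseteq> Ef ` D5"
  proof
    fix x assume "x \<in> V"
    then obtain k i j a b where x: "x = E k i j a b" unfolding V_def by blast
    hence "x = Ef (k mod p, i mod p, j mod p, a mod p, b mod p)" unfolding Ef_def using E_mod by simp
    moreover have "(k mod p, i mod p, j mod p, a mod p, b mod p) \<in> D5"
      unfolding D5_def using p_gt1 by auto
    ultimately show "x \<in> Ef ` D5" by blast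
  qed
qed

lemma card_D5: "card D5 = p ^ 5" unfolding D5_def by (simp add: card_cartesian_product eval_nat_numeral)

lemma Ef_inj: "inj_on Ef D5"
proof (rule eq_card_imp_inj_on)
  show "finite D5" unfolding D5_def by simp
  show "card (Ef ` D5) = card D5" using V_img V_Q c2 card_D5 by simp
qed

lemma E_inj: "E k i j a b = E k' i' j' a' b' \<Longrightarrow>
   k mod p = k' mod p \<and> i mod p = i' mod p \<and> j mod p = j' mod p \<and> a mod p = a' mod p \<and> b mod p = b' mod p"
proof -
  assume h: "E k i j a b = E k' i' j' a' b'"
  have "Ef (k mod p, i mod p, j mod p, a mod p, b mod p) = Ef (k' mod p, i' mod p, j' mod p, a' mod p, b' mod p)"
    unfolding Ef_def using h E_mod by (metis case_prod_conv)
  moreover have "(k mod p, i mod p, j mod p, a mod p, b mod p) \<in> D5"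
     "(k' mod p, i' mod p, j' mod p, a' mod p, b' mod p) \<in> D5"
    unfolding D5_def using p_gt1 by auto
  ultimately show ?thesis using Ef_inj unfolding inj_on_def by blast
qed

lemma Q_E: "x \<in> Q \<Longrightarrow> \<exists>k i j a b. x = E k i j a b \<and> k < p \<and> i < p \<and> j < p \<and> a < p \<and> b < p"
  using V_img V_Q unfolding D5_def Ef_def by auto blast

end

context L begin

lemma inv_bb: "inv bb = E (p-1) 0 0 0 0"
  using E_inv[of 1 0 0 0 0] Ebb[of 1] a1 a2 by simp

lemma bbE: "bb = E 1 0 0 0 0" using Ebb[of 1] a1 a2 by simp

lemma conjE: "inv g \<otimes> E k i j u v \<otimes> g = E k i j u v \<otimes> cm (E k i j u v) g" if "g \<in> carrier G"
  using conj_cm that by simp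

lemma R1: "\<exists>k i j u v. cm (a2 [^] (b::nat)) a1 = E k i j u v \<and> (k + b) mod p = 0"
proof (induction b)
  case 0 show ?case using E_0 a1 by (metis add_0 cm_one_iff mod_0 nat_pow_0 one_closed l_one r_one)
next
  case (Suc b)
  from Suc.IH obtain k i j u v where X: "cm (a2 [^] b) a1 = E k i j u v" and kb: "(k + b) mod p = 0" by auto
  have "cm (a2 [^] Suc b) a1 = (inv a2 \<otimes> E k i j u v \<otimes> a2) \<otimes> cm a2 a1"
    using C1[of "a2 [^] b" a2 a1] a1 a2 X by (simp add: nat_pow_Suc)
  also have "\<dots> = E (k + (p-1)) i (j+k) (u + m*j) (v + (i + n*j))"
    using a1 a2 conjE[OF a2] E_cm2 cm_inv[OF a2 a1, symmetric] inv_bb by (simp add: E_mult)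
  finally have "cm (a2 [^] Suc b) a1 = E (k + (p-1)) i (j+k) (u + m*j) (v + (i + n*j))" .
  moreover have "(k + (p-1) + Suc b) mod p = 0"
  proof -
    have "k + (p-1) + Suc b = (k + b) + p" using p_gt1 by simp
    thus ?thesis using kb by (simp only: mod_add_self2)
  qed
  ultimately show ?case by (intro exI conjI)
qed

end

context L begin

lemma R2: "\<exists>k i j u v. cm (a1 [^] (a::nat)) a2 = E k i j u v \<and> k mod p = a mod p"
proof (induction a)
  case 0 show ?case using E_0 a2 by (metis cm_one_iff nat_pow_0 one_closed l_one r_one)
next
  case (Suc a)
  then obtain k i j u v where X: "cm (a1 [^] a) a2 = E k i j u v" and ka: "k mod p = a mod p" by auto
  have "cm (a1 [^] Suc a) a2 = (inv a1 \<otimes> E k i j u v \<otimes> a1) \<otimes> cm a1 a2"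
    using C1[of "a1 [^] a" a1 a2] a1 a2 X by (simp add: nat_pow_Suc)
  also have "\<dots> = E (k + 1) (i+k) j (u + i) (v + j)"
    using a1 a2 conjE[OF a1] E_cm1 bbE by (simp add: E_mult)
  finally have "cm (a1 [^] Suc a) a2 = E (k + 1) (i+k) j (u + i) (v + j)" .
  moreover have "(k + 1) mod p = Suc a mod p" using ka by (metis Suc_eq_plus1 mod_Suc_eq)
  ultimately show ?case by (intro exI conjI)
qed

lemma R3: "\<exists>i' j' u' v'. inv (a2 [^] (t::nat)) \<otimes> E k i j u v \<otimes> a2 [^] t = E k i' j' u' v'"
proof (induction t arbitrary: i j u v)
  case 0 show ?case by auto
next
  case (Suc t)
  obtain i' j' u' v' where X: "inv (a2 [^] t) \<otimes> E k i j u v \<otimes> a2 [^] t = E k i' j' u' v'"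
    using Suc.IH[of i j u v] by auto
  have "inv (a2 [^] Suc t) \<otimes> E k i j u v \<otimes> a2 [^] Suc t =
        inv a2 \<otimes> (inv (a2 [^] t) \<otimes> E k i j u v \<otimes> a2 [^] t) \<otimes> a2"
    using a2 by (simp add: nat_pow_Suc m_assoc inv_mult_group)
  also have "\<dots> = E k i' (j'+k) (u' + m*j') (v' + (i' + n*j'))"
    unfolding X using conjE[OF a2] E_cm2 by (simp add: E_mult)
  finally show ?case by (intro exI conjI)
qed

lemma cm_pow_self: "x \<in> carrier G \<Longrightarrow> cm (x [^] (a::nat)) x = \<one>"
proof -
  assume x: "x \<in> carrier G"
  have "x [^] a \<otimes> x = x \<otimes> x [^] a" using nat_pow_Suc[of x a] nat_pow_Suc2[OF x, of a] by simp
  thus ?thesis using cm_one_iff x by simp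
qed

lemma K: assumes c: "c \<in> Q"
  shows "\<exists>k i j u v. cm (a1 [^] (a::nat) \<otimes> a2 [^] (b::nat) \<otimes> c) a1 = E k i j u v \<and> (k + b) mod p = 0"
    and "\<exists>k i j u v. cm (a1 [^] (a::nat) \<otimes> a2 [^] (b::nat) \<otimes> c) a2 = E k i j u v \<and> k mod p = a mod p"
proof -
  obtain k0 i0 j0 u0 v0 where cE: "c = E k0 i0 j0 u0 v0" using Q_E[OF c] by auto
  have split: "cm (a1 [^] a \<otimes> a2 [^] b \<otimes> c) g = cm (a1 [^] a \<otimes> a2 [^] b) g \<otimes> cm c g" if g: "g \<in> carrier G" for g
  proof -
    have "inv c \<otimes> cm (a1 [^] a \<otimes> a2 [^] b) g \<otimes> c = cm (a1 [^] a \<otimes> a2 [^] b) g"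
      using Qc[OF cm_Q c, of "a1 [^] a \<otimes> a2 [^] b" g] c Q_car a1 a2 g by (simp add: m_assoc)
    thus ?thesis using C1[of "a1 [^] a \<otimes> a2 [^] b" c g] c Q_car a1 a2 g by simp
  qed
  have s1: "cm (a1 [^] a \<otimes> a2 [^] b) a1 = cm (a2 [^] b) a1"
    using C1[of "a1 [^] a" "a2 [^] b" a1] cm_pow_self a1 a2 by simp
  obtain k i j u v where X: "cm (a2 [^] (b::nat)) a1 = E k i j u v" and kb: "(k + b) mod p = 0"
    using R1[of b] by auto
  show "\<exists>k i j u v. cm (a1 [^] (a::nat) \<otimes> a2 [^] (b::nat) \<otimes> c) a1 = E k i j u v \<and> (k + b) mod p = 0"
  proof -
    have "cm (a1 [^] a \<otimes> a2 [^] b \<otimes> c) a1 = E k (i + k0) j (u + i0) (v + j0)"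
      using split[OF a1] s1 X cE E_cm1 E_mult by simp
    thus ?thesis using kb by (intro exI conjI)
  qed
  obtain k i j u v where Y: "cm (a1 [^] (a::nat)) a2 = E k i j u v" and ka: "k mod p = a mod p"
    using R2[of a] by auto
  obtain i' j' u' v' where Z: "inv (a2 [^] b) \<otimes> E k i j u v \<otimes> a2 [^] b = E k i' j' u' v'"
    using R3[of b k i j u v] by auto
  have s2: "cm (a1 [^] a \<otimes> a2 [^] b) a2 = E k i' j' u' v'"
    using C1[of "a1 [^] a" "a2 [^] b" a2] cm_pow_self a1 a2 Y Z by simp
  show "\<exists>k i j u v. cm (a1 [^] (a::nat) \<otimes> a2 [^] (b::nat) \<otimes> c) a2 = E k i j u v \<and> k mod p = a mod p"
  proof -
    have "cm (a1 [^] a \<otimes> a2 [^] b \<otimes> c) a2 = E k i' (j' + k0) (u' + m * j0) (v' + (i0 + n * j0))"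
      using split[OF a2] s2 cE E_cm2 E_mult by simp
    thus ?thesis using ka by (intro exI conjI)
  qed
qed

end

context L begin

definition "F3 = {..<p} \<times> {..<p} \<times> Q"
definition "ff = (\<lambda>(a::nat,b::nat,c). a1 [^] a \<otimes> a2 [^] b \<otimes> c)"

lemma natcong0: "(a::nat) mod q = b mod q \<longleftrightarrow> int q dvd (int a - int b)"
  by (metis of_nat_eq_iff zmod_int mod_eq_dvd_iff)

lemma modfact: "(k + b) mod p = 0 \<Longrightarrow> (k' + b') mod p = 0 \<Longrightarrow> k mod p = k' mod p \<Longrightarrow> b mod p = b' mod p"
proof -
  assume h: "(k + b) mod p = 0" "(k' + b') mod p = 0" "k mod p = k' mod p"
  have d: "int p dvd (int (k+b) - int 0)" "int p dvd (int (k'+b') - int 0)" "int p dvd (int k - int k')"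
    using h natcong0 by (metis mod_0)+
  have "int b - int b' = (int (k+b) - int 0) - (int (k'+b') - int 0) - (int k - int k')" by simp
  hence "int p dvd (int b - int b')" using d by (metis dvd_diff)
  thus ?thesis using natcong0 by blast
qed

lemma ff_inj: "inj_on ff F3"
proof (rule inj_onI)
  fix x y assume x: "x \<in> F3" and y: "y \<in> F3" and eq: "ff x = ff y"
  obtain a b c where xd: "x = (a,b,c)" and abc: "a < p" "b < p" "c \<in> Q" using x unfolding F3_def by auto
  obtain a' b' c' where yd: "y = (a',b',c')" and abc': "a' < p" "b' < p" "c' \<in> Q" using y unfolding F3_def by auto
  have eq': "a1 [^] a \<otimes> a2 [^] b \<otimes> c = a1 [^] a' \<otimes> a2 [^] b' \<otimes> c'" using eq xd yd ff_def by simp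
  obtain k i j u v where K1: "cm (a1 [^] a \<otimes> a2 [^] b \<otimes> c) a1 = E k i j u v" "(k + b) mod p = 0"
    using K(1)[OF abc(3), of a b] by auto
  obtain k' i' j' u' v' where K1': "cm (a1 [^] a' \<otimes> a2 [^] b' \<otimes> c') a1 = E k' i' j' u' v'" "(k' + b') mod p = 0"
    using K(1)[OF abc'(3), of a' b'] by auto
  have "E k i j u v = E k' i' j' u' v'" using K1(1) K1'(1) eq' by simp
  hence "k mod p = k' mod p" using E_inj by blast
  hence bb': "b = b'" using modfact[OF K1(2) K1'(2)] abc abc' by simp
  obtain k i j u v where K2: "cm (a1 [^] a \<otimes> a2 [^] b \<otimes> c) a2 = E k i j u v" "k mod p = a mod p"
    using K(2)[OF abc(3), of a b] by auto
  obtain k' i' j' u' v' where K2': "cm (a1 [^] a' \<otimes> a2 [^] b' \<otimes> c') a2 = E k' i' j' u' v'" "k' mod p = a' mod p"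
    using K(2)[OF abc'(3), of a' b'] by auto
  have "E k i j u v = E k' i' j' u' v'" using K2(1) K2'(1) eq' by simp
  hence "k mod p = k' mod p" using E_inj by blast
  hence aa': "a = a'" using K2(2) K2'(2) abc abc' by simp
  have "c = c'" using eq' unfolding aa' bb' using abc(3) abc'(3) Q_car a1 a2 by (simp add: m_assoc)
  thus "x = y" using xd yd aa' bb' by simp
qed

lemma ff_surj: "ff ` F3 = carrier G"
proof (rule card_seteq)
  show "finite (carrier G)" by (rule fin)
  show "ff ` F3 \<subseteq> carrier G" unfolding F3_def ff_def using a1 a2 Q_car by auto
  have "card (ff ` F3) = card F3" using ff_inj card_image by blast
  also have "\<dots> = p * p * p ^ 5" unfolding F3_def using c2 by (simp add: card_cartesian_product)
  finally show "card (carrier G) \<le> card (ff ` F3)" using cardG by (simp add: eval_nat_numeral)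
qed

lemma toQ: assumes x: "x \<in> carrier G" and h1: "\<exists>i j u v. cm x a1 = E 0 i j u v"
  and h2: "\<exists>i j u v. cm x a2 = E 0 i j u v" shows "x \<in> Q"
proof -
  have "x \<in> ff ` F3" using x ff_surj by simp
  then obtain a b c where "(a,b,c) \<in> F3" "x = ff (a,b,c)" by auto
  hence abc: "a < p" "b < p" "c \<in> Q" and xd: "x = a1 [^] a \<otimes> a2 [^] b \<otimes> c"
    unfolding F3_def ff_def by auto
  obtain k i j u v where K1: "cm x a1 = E k i j u v" "(k + b) mod p = 0"
    using K(1)[OF abc(3), of a b] xd by auto
  obtain i1 j1 u1 v1 where "cm x a1 = E 0 i1 j1 u1 v1" using h1 by auto
  hence "E 0 i1 j1 u1 v1 = E k i j u v" using K1(1) by simp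
  hence "k mod p = 0" using E_inj[of 0 i1 j1 u1 v1 k i j u v] by simp
  hence "(k + b) mod p = b mod p" by (metis add_0 mod_add_left_eq)
  hence b0: "b = 0" using K1(2) abc by simp
  obtain k i j u v where K2: "cm x a2 = E k i j u v" "k mod p = a mod p"
    using K(2)[OF abc(3), of a b] xd by auto
  obtain i1 j1 u1 v1 where "cm x a2 = E 0 i1 j1 u1 v1" using h2 by auto
  hence "E 0 i1 j1 u1 v1 = E k i j u v" using K2(1) by simp
  hence "k mod p = 0" using E_inj[of 0 i1 j1 u1 v1 k i j u v] by simp
  hence a0: "a = 0" using K2(2) abc by simp
  show ?thesis using xd a0 b0 abc Q_car by simp
qed

end

context L begin

definition "PP H = {x \<in> carrier G. \<forall>y \<in> carrier G. cm x y \<in> H}"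

lemma cent_conj: "cent h \<Longrightarrow> y \<in> carrier G \<Longrightarrow> inv y \<otimes> h \<otimes> y = h"
proof -
  assume h: "cent h" and y: "y \<in> carrier G"
  have hc: "h \<in> carrier G" and hy: "h \<otimes> y = y \<otimes> h" using h y cent_def by auto
  have "inv y \<otimes> h \<otimes> y = inv y \<otimes> (h \<otimes> y)" using hc y by (simp add: m_assoc)
  also have "\<dots> = h" using hy hc y by simp
  finally show ?thesis .
qed

lemma PP_sub: assumes H: "subgroup H G" "H \<subseteq> Collect cent" shows "subgroup (PP H) G"
proof (rule fin_submonoid_subgroup[OF fin])
  show "PP H \<subseteq> carrier G" unfolding PP_def by auto
  show "\<one> \<in> PP H" unfolding PP_def using H subgroup.one_closed by (force simp: grp_comm_def m_assoc)
  show "x \<in> PP H \<Longrightarrow> y \<in> PP H \<Longrightarrow> x \<otimes> y \<in> PP H" for x y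
  proof -
    assume x: "x \<in> PP H" and y: "y \<in> PP H"
    have "cm (x \<otimes> y) z \<in> H" if z: "z \<in> carrier G" for z
    proof -
      have "cm x z \<in> H" "cm y z \<in> H" using x y z unfolding PP_def by auto
      moreover hence "inv y \<otimes> cm x z \<otimes> y = cm x z" using cent_conj H y unfolding PP_def by auto
      ultimately show ?thesis using C1[of x y z] x y z H subgroup.m_closed unfolding PP_def by fastforce
    qed
    thus ?thesis using x y unfolding PP_def by auto
  qed
qed

lemma PP_gen: assumes H: "subgroup H G" "H \<subseteq> Collect cent" and x: "x \<in> carrier G"
  and h: "cm x a1 \<in> H" "cm x a2 \<in> H" shows "x \<in> PP H"
proof -
  have "generate G {a1, a2} \<subseteq> {y \<in> carrier G. cm x y \<in> H}"
  proof (rule fin_generate_sub[OF fin])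
    show "\<one> \<in> {y \<in> carrier G. cm x y \<in> H}" using x H subgroup.one_closed by (force simp: grp_comm_def m_assoc)
    show "u \<in> {y \<in> carrier G. cm x y \<in> H} \<Longrightarrow> v \<in> {y \<in> carrier G. cm x y \<in> H} \<Longrightarrow>
          u \<otimes> v \<in> {y \<in> carrier G. cm x y \<in> H}" for u v
      using C2[OF x, of u v] cent_conj H subgroup.m_closed by fastforce
  qed (use h a1 a2 in auto)
  thus ?thesis using gen x unfolding PP_def by auto
qed


lemma H_in_PP: assumes H: "subgroup H G" "H \<subseteq> Collect cent" shows "H \<subseteq> PP H"
proof
  fix h assume h: "h \<in> H"
  have c: "cent h" using h H by auto
  have "cm h y \<in> H" if "y \<in> carrier G" for y using cent_cm[OF c that] subgroup.one_closed[OF H(1)] by simp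
  thus "h \<in> PP H" unfolding PP_def using c cent_def by auto
qed

lemma H_normal: assumes H: "subgroup H G" "H \<subseteq> Collect cent" shows "H \<lhd> G"
proof -
  have "x \<otimes> h \<otimes> inv x \<in> H" if x: "x \<in> carrier G" and h: "h \<in> H" for x h
  proof -
    have "inv (inv x) \<otimes> h \<otimes> inv x = h" using cent_conj[of h "inv x"] H h x by auto
    thus ?thesis using x h by simp
  qed
  thus ?thesis unfolding normal_inv_iff using H by blast
qed

lemma coset_eq_iff: assumes H: "subgroup H G" and u: "u \<in> carrier G" and v: "v \<in> carrier G"
  shows "H #> u = H #> v \<longleftrightarrow> u \<otimes> inv v \<in> H"
proof
  assume "H #> u = H #> v"
  hence "u \<in> H #> v" using rcos_self[OF u H] by simp
  thus "u \<otimes> inv v \<in> H" using subgroup.rcos_module_imp[OF H is_group v] by blast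
next
  assume "u \<otimes> inv v \<in> H"
  hence "u \<in> H #> v" using subgroup.rcos_module_rev[OF H is_group v u] by blast
  thus "H #> u = H #> v" using repr_independence[OF _ v H] by simp
qed

lemma center_quot: assumes H: "subgroup H G" "H \<subseteq> Collect cent"
  shows "grp_center (G Mod H) = (\<lambda>x. H #> x) ` PP H"
proof -
  interpret N: normal H G using H_normal[OF H] .
  have key: "(\<forall>y\<in>carrier G. H #> (x \<otimes> y) = H #> (y \<otimes> x)) \<longleftrightarrow> x \<in> PP H" if x: "x \<in> carrier G" for x
  proof -
    have "(\<forall>y\<in>carrier G. H #> (x \<otimes> y) = H #> (y \<otimes> x)) \<longleftrightarrow> (\<forall>y\<in>carrier G. cm (inv x) (inv y) \<in> H)"
      using coset_eq_iff[OF H(1)] x by (simp add: grp_comm_def inv_mult_group m_assoc)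
    also have "\<dots> \<longleftrightarrow> (\<forall>y\<in>carrier G. cm (inv x) y \<in> H)"
    proof
      assume A: "\<forall>y\<in>carrier G. cm (inv x) (inv y) \<in> H"
      show "\<forall>y\<in>carrier G. cm (inv x) y \<in> H"
      proof
        fix y assume y: "y \<in> carrier G"
        have "cm (inv x) (inv (inv y)) \<in> H" using bspec[OF A inv_closed[OF y]] .
        thus "cm (inv x) y \<in> H" using y by simp
      qed
    qed simp
    also have "\<dots> \<longleftrightarrow> inv x \<in> PP H" unfolding PP_def using x by simp
    also have "\<dots> \<longleftrightarrow> x \<in> PP H"
    proof
      assume "inv x \<in> PP H"
      hence "inv (inv x) \<in> PP H" using subgroup.m_inv_closed[OF PP_sub[OF H]] by blast
      thus "x \<in> PP H" using x by simp
    qed (rule subgroup.m_inv_closed[OF PP_sub[OF H]])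
    finally show ?thesis .
  qed
  show ?thesis
  proof
    show "grp_center (G Mod H) \<subseteq> (\<lambda>x. H #> x) ` PP H"
    proof
      fix Y0 assume Y0: "Y0 \<in> grp_center (G Mod H)"
      then obtain x where x: "x \<in> carrier G" "Y0 = H #> x" unfolding grp_center_def carrier_FactGroup by auto
      have "\<forall>y\<in>carrier G. H #> (x \<otimes> y) = H #> (y \<otimes> x)"
        using Y0 x unfolding grp_center_def carrier_FactGroup by (auto simp: N.rcos_sum)
      thus "Y0 \<in> (\<lambda>x. H #> x) ` PP H" using key x by blast
    qed
    show "(\<lambda>x. H #> x) ` PP H \<subseteq> grp_center (G Mod H)"
    proof
      fix Y0 assume "Y0 \<in> (\<lambda>x. H #> x) ` PP H"
      then obtain x where x: "x \<in> PP H" "Y0 = H #> x" by blast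
      have xc: "x \<in> carrier G" using x unfolding PP_def by auto
      thus "Y0 \<in> grp_center (G Mod H)" using key[OF xc] x unfolding grp_center_def carrier_FactGroup
        by (auto simp: N.rcos_sum)
    qed
  qed
qed

lemma card_center_quot: assumes H: "subgroup H G" "H \<subseteq> Collect cent"
  shows "card (grp_center (G Mod H)) * card H = card (PP H)"
proof -
  have sg: "subgroup H (G\<lparr>carrier := PP H\<rparr>)"
    using subgroup_incl[OF H(1) PP_sub[OF H] H_in_PP[OF H]] .
  interpret P: group "G\<lparr>carrier := PP H\<rparr>" using subgroup_imp_group[OF PP_sub[OF H]] .
  have "card (rcosets\<^bsub>G\<lparr>carrier := PP H\<rparr>\<^esub> H) * card H = order (G\<lparr>carrier := PP H\<rparr>)"
    using P.lagrange[OF sg] .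
  moreover have "rcosets\<^bsub>G\<lparr>carrier := PP H\<rparr>\<^esub> H = (\<lambda>x. H #> x) ` PP H"
    unfolding RCOSETS_def r_coset_def by auto
  ultimately show ?thesis using center_quot[OF H] by (simp add: order_def)
qed

end


lemma int_dvd_small: "(p::int) dvd i \<Longrightarrow> 0 \<le> i \<Longrightarrow> i < p \<Longrightarrow> i = 0"
proof (rule ccontr)
  assume d: "p dvd i" and i: "0 \<le> i" "i < p" and ne: "i \<noteq> 0"
  hence "0 < i" by simp
  hence "p \<le> i" using zdvd_imp_le[OF d] by blast
  thus False using i by simp
qed

lemma NT1:
  fixes p i j m n c :: int
  assumes pp: "Factorial_Ring.prime p" and i: "0 \<le> i" "i < p" and j: "0 \<le> j" "j < p" and nz: "\<not> (i = 0 \<and> j = 0)"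
    and h1: "p dvd (m * j - c * i)" and h2: "p dvd (i + n * j - c * j)"
  shows "\<exists>l u :: int. 0 < l \<and> l < p \<and> 0 \<le> u \<and> u < p \<and> (m * l ^ 2 + n * l * u - u ^ 2) mod p = 0"
proof -
  have j0: "j \<noteq> 0"
  proof
    assume "j = 0"
    hence "p dvd i" using h2 by simp
    hence "i = 0" using int_dvd_small i by blast
    thus False using nz \<open>j = 0\<close> by simp
  qed
  have p0: "p > 0" using pp prime_gt_0_int by blast
  define u where "u = (-i) mod p"
  have u: "0 \<le> u" "u < p" unfolding u_def using p0 by auto
  have "(-i) = p * ((-i) div p) + u" unfolding u_def by simp
  hence ui: "u + i = p * (- ((-i) div p))" by simp
  have ex: "m * j ^ 2 + n * j * u - u ^ 2 = (u+i) * (n * j - u + i) - i * (i+n * j-c * j) + j * (m * j - c * i)"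
    by (simp add: algebra_simps power2_eq_square)
  have d1: "p dvd (u+i) * (n * j - u + i)" using ui by simp
  have d2: "p dvd i * (i+n * j-c * j)" using h2 by simp
  have d3: "p dvd j * (m * j - c * i)" using h1 by simp
  have "p dvd (m * j ^ 2 + n * j * u - u ^ 2)" unfolding ex using d1 d2 d3 by (intro dvd_add dvd_diff)
  hence md: "(m * j ^ 2 + n * j * u - u ^ 2) mod p = 0" by (simp only: dvd_eq_mod_eq_0)
  have "0 < j" using j j0 by simp
  thus ?thesis using md j u by (intro exI[of _ j] exI[of _ u] conjI)
qed

lemma NT2:
  fixes p l u m n c :: int
  assumes pp: "Factorial_Ring.prime p" and l: "0 < l" "l < p" and h: "p dvd (m * l ^ 2 + n * l * u - u ^ 2)"
    and it: "i = -u + p * t"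
  shows "\<exists>c'. p dvd (c' * i - m * c * l) \<and> p dvd (c' * l - (c * i + n * c * l))"
proof -
  have "\<not> p dvd l" using int_dvd_small[of p l] l by auto
  hence "coprime l p" using prime_imp_coprime[OF pp] by (simp add: coprime_commute)
  hence "gcd l p = 1" by simp
  then obtain x v where "x * l + v * p = 1" using bezout_int[of l p] by auto
  hence s: "l * x = 1 + p * (- v)" by (simp add: algebra_simps)
  define s where "s = - v"
  have s: "l * x = 1 + p * s" using s unfolding s_def .
  obtain hh where hh: "m * l ^ 2 + n * l * u - u ^ 2 = p * hh" using h by blast
  define c' where "c' = c * (i + n * l) * x"
  have A1: "c' * l = c * (i + n * l) * (l * x)" unfolding c'_def by (simp add: ac_simps)
  have A: "c' * l - (c * i + n * c * l) = p * (c * (i + n * l) * s)"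
    unfolding A1 s by (simp add: algebra_simps)
  have B1: "l * (c' * i - m * c * l) = c * (i+n * l) * i * (l * x) - c * (m * l^2)"
    unfolding c'_def by (simp add: algebra_simps power2_eq_square)
  have B2: "m * l^2 = p * hh - n * l * u + u^2" using hh by (simp add: algebra_simps)
  have B3: "c * (i+n * l) * i - c * (- n * l * u + u^2) = p * (c * (- 2 * u * t + p * t^2 + n * l * t))"
    unfolding it by (simp add: algebra_simps power2_eq_square)
  have B: "l * (c' * i - m * c * l) = p * (c * (- hh - 2 * u * t + p * t^2 + n * l * t) + c * (i+n * l) * i * s)"
    unfolding B1 B2 s using B3 by (simp add: algebra_simps)
  have "p dvd l * (c' * i - m * c * l)" unfolding B by simp
  hence "p dvd (c' * i - m * c * l)" using prime_dvd_mult_iff[OF pp] \<open>\<not> p dvd l\<close> by blast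
  moreover have "p dvd (c' * l - (c * i + n * c * l))" unfolding A by simp
  ultimately show ?thesis by blast
qed

lemma natcong: "(a::nat) mod p = b mod p \<longleftrightarrow> int p dvd (int a - int b)"
  by (metis of_nat_eq_iff zmod_int mod_eq_dvd_iff)


context L begin

lemma cent_S4: "cent (E 0 0 0 a b)"
proof -
  have "E 0 0 0 a b = e11 [^] a \<otimes> e12 [^] b" unfolding E_def by simp
  thus ?thesis using cent_mul cent_pow e11_cent e12_cent by simp
qed

lemma cent_S4_form: assumes "cent x" shows "\<exists>a b. x = E 0 0 0 a b \<and> a < p \<and> b < p"
proof -
  have x: "x \<in> carrier G" using assms cent_def by auto
  have c1: "cm x a1 = E 0 0 0 0 0" "cm x a2 = E 0 0 0 0 0" using cent_cm[OF assms] a1 a2 E_0 by auto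
  have "x \<in> Q" using toQ[OF x] c1 by blast
  then obtain k i j u v where xe: "x = E k i j u v" "k < p" "i < p" "j < p" "u < p" "v < p" using Q_E by blast
  have "E 0 k 0 i j = E 0 0 0 0 0" using c1 xe E_cm1 by simp
  hence "k = 0" "i = 0" "j = 0" using E_inj xe by (metis mod_0 mod_less)+
  thus ?thesis using xe by blast
qed

lemma center_cent: "grp_center G = Collect cent"
  unfolding grp_center_def cent_def by auto

lemma PP_in_Q: assumes H: "subgroup H G" "H \<subseteq> Collect cent" and x: "x \<in> PP H"
  shows "\<exists>i j u v. x = E 0 i j u v \<and> i < p \<and> j < p \<and> u < p \<and> v < p"
proof -
  have xc: "x \<in> carrier G" using x PP_def by auto
  have h: "cm x a1 \<in> H" "cm x a2 \<in> H" using x a1 a2 unfolding PP_def by auto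
  then obtain a b a' b' where f: "cm x a1 = E 0 0 0 a b" "cm x a2 = E 0 0 0 a' b'"
    using cent_S4_form H by (meson mem_Collect_eq subsetD)
  have "x \<in> Q" using toQ[OF xc] f by (metis E_cong mod_0)
  then obtain k i j u v where xe: "x = E k i j u v" "k < p" "i < p" "j < p" "u < p" "v < p" using Q_E by blast
  have "E 0 k 0 i j = E 0 0 0 a b" using f xe E_cm1 by simp
  hence "k = 0" using E_inj xe by (metis mod_0 mod_less)
  thus ?thesis using xe by blast
qed

lemma subgroup_pow_in: "subgroup H G \<Longrightarrow> h \<in> H \<Longrightarrow> h [^] (c::nat) \<in> H"
  by (induction c) (auto simp: subgroup.one_closed subgroup.m_closed)

lemma dir1: assumes H: "subgroup H G" "H \<subseteq> Collect cent" and cH: "card H = p"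
  and cZ: "card (grp_center (G Mod H)) = p ^ 2"
  shows "\<exists>l u :: int. 0 < l \<and> l < int p \<and> 0 \<le> u \<and> u < int p \<and>
              (int m * l ^ 2 + int n * l * u - u ^ 2) mod int p = 0"
proof -
  have cP: "card (PP H) = p ^ 3" using card_center_quot[OF H] cH cZ by (simp add: eval_nat_numeral)
  let ?S4 = "(\<lambda>(a,b). E 0 0 0 a b) ` ({..<p} \<times> {..<p})"
  have "card ?S4 \<le> p ^ 2" using card_image_le[of "{..<p} \<times> {..<p}"] by (simp add: card_cartesian_product power2_eq_square)
  also have "\<dots> < p ^ 3" using p_gt1 by (simp add: power_strict_increasing)
  finally have "\<not> PP H \<subseteq> ?S4" using cP by (metis card_mono finite_SigmaI finite_imageI finite_lessThan not_le)
  then obtain x where xP: "x \<in> PP H" and xS: "x \<notin> ?S4" by blast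
  obtain i j u v where xe: "x = E 0 i j u v" "i < p" "j < p" "u < p" "v < p" using PP_in_Q[OF H xP] by blast
  have nz: "\<not> (i = 0 \<and> j = 0)"
  proof
    assume "i = 0 \<and> j = 0"
    hence "x = (\<lambda>(a,b). E 0 0 0 a b) (u, v)" using xe by simp
    moreover have "(u, v) \<in> {..<p} \<times> {..<p}" using xe by simp
    ultimately have "x \<in> ?S4" by (rule image_eqI)
    thus False using xS by simp
  qed
  have h1: "E 0 0 0 i j \<in> H" using xP xe a1 E_cm1 unfolding PP_def by force
  have h2: "E 0 0 0 (m*j) (i+n*j) \<in> H" using xP xe a2 E_cm2 unfolding PP_def by force
  let ?Hs = "(\<lambda>c. E 0 0 0 (c*i) (c*j)) ` {..<p}"
  have Hs_sub: "?Hs \<subseteq> H" using subgroup_pow_in[OF H(1) h1] E_pow by auto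
  have pr: "Factorial_Ring.prime (int p)" using pp by simp
  have inj: "inj_on (\<lambda>c. E 0 0 0 (c*i) (c*j)) {..<p}"
  proof (rule inj_onI)
    fix c c' assume c: "c \<in> {..<p}" and c': "c' \<in> {..<p}" and eq: "E 0 0 0 (c*i) (c*j) = E 0 0 0 (c'*i) (c'*j)"
    have d: "int p dvd (int c - int c') * int i" "int p dvd (int c - int c') * int j"
      using E_inj[OF eq] natcong by (simp_all add: algebra_simps)
    have "int p dvd (int c - int c')"
    proof (cases "i = 0")
      case True
      hence "\<not> int p dvd int j" using nz xe(3) int_dvd_small by fastforce
      thus ?thesis using d(2) prime_dvd_mult_iff[OF pr] by blast
    next
      case False
      hence "\<not> int p dvd int i" using xe(2) int_dvd_small by fastforce
      thus ?thesis using d(1) prime_dvd_mult_iff[OF pr] by blast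
    qed
    hence "c mod p = c' mod p" using natcong by blast
    thus "c = c'" using c c' by simp
  qed
  have "card ?Hs = p" using card_image[OF inj] by simp
  hence HsH: "?Hs = H" using Hs_sub cH fin H(1) subgroup.subset
    by (metis card_seteq finite_subset order_refl)
  then obtain c where cc: "c < p" "E 0 0 0 (m*j) (i+n*j) = E 0 0 0 (c*i) (c*j)" using h2 by auto
  have d1: "int p dvd (int m * int j - int c * int i)" and d2: "int p dvd (int i + int n * int j - int c * int j)"
    using E_inj[OF cc(2)] natcong by simp_all
  show ?thesis using NT1[OF pr _ _ _ _ _ d1 d2] xe nz by simp
qed

end

context L begin

lemma dir2: assumes l: "0 < l" "l < int p" and u: "0 \<le> u" "u < int p"
  and h: "(int m * l ^ 2 + int n * l * u - u ^ 2) mod int p = 0"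
  shows "\<exists>H. subgroup H G \<and> H \<subseteq> grp_center G \<and> card H = p \<and> card (grp_center (G Mod H)) = p ^ 2"
proof -
  have pr: "Factorial_Ring.prime (int p)" using pp by simp
  have p0: "int p > 0" using p_gt1 by simp
  define j where "j = nat l"
  define i where "i = nat ((-u) mod int p)"
  have ji: "int j = l" unfolding j_def using l by simp
  have ii: "int i = (-u) mod int p" unfolding i_def using p0 by simp
  define t where "t = - ((-u) div int p)"
  have it: "int i = -u + int p * t" unfolding ii t_def
    by (metis add.commute add_diff_cancel_left' diff_minus_eq_add div_mult_mod_eq mult.commute mult_minus_right)
  have jp: "\<not> int p dvd int j" using ji l int_dvd_small by fastforce
  define Hf where "Hf = (\<lambda>c. E 0 0 0 (c*i) (c*j))"
  define H where "H = Hf ` {..<p}"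
  have Hall: "Hf c \<in> H" for c
  proof -
    have "Hf c = Hf (c mod p)" unfolding Hf_def
      by (rule E_cong) (simp_all add: mod_mult_left_eq)
    thus ?thesis unfolding H_def using p_gt1 by auto
  qed
  have Hform: "x \<in> H \<Longrightarrow> \<exists>c. x = Hf c" for x unfolding H_def by auto
  have Hsub: "subgroup H G"
  proof (rule fin_submonoid_subgroup[OF fin])
    show "H \<subseteq> carrier G" unfolding H_def Hf_def by auto
    show "\<one> \<in> H" using Hall[of 0] E_0 unfolding Hf_def by simp
    show "x \<in> H \<Longrightarrow> y \<in> H \<Longrightarrow> x \<otimes> y \<in> H" for x y
      using Hform Hall unfolding Hf_def by (metis E_mult add_0 add_mult_distrib)
  qed
  have Hcent: "H \<subseteq> Collect cent" unfolding H_def Hf_def using cent_S4 by auto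
  have injH: "inj_on Hf {..<p}"
  proof (rule inj_onI)
    fix c c' assume c: "c \<in> {..<p}" and c': "c' \<in> {..<p}" and eq: "Hf c = Hf c'"
    have "int p dvd (int c - int c') * int j"
      using E_inj[OF eq[unfolded Hf_def]] natcong by (simp add: algebra_simps)
    hence "int p dvd (int c - int c')" using prime_dvd_mult_iff[OF pr] jp by blast
    hence "c mod p = c' mod p" using natcong by blast
    thus "c = c'" using c c' by simp
  qed
  have cH: "card H = p" unfolding H_def using card_image[OF injH] by simp
  define Pf where "Pf = (\<lambda>(c,a,b). E 0 (c*i) (c*j) a b)"
  have PPeq: "PP H = Pf ` ({..<p} \<times> {..<p} \<times> {..<p})"
  proof
    show "PP H \<subseteq> Pf ` ({..<p} \<times> {..<p} \<times> {..<p})"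
    proof
      fix x assume x: "x \<in> PP H"
      obtain i' j' a b where xe: "x = E 0 i' j' a b" "i' < p" "j' < p" "a < p" "b < p"
        using PP_in_Q[OF Hsub Hcent x] by blast
      have "cm x a1 \<in> H" using x a1 unfolding PP_def by auto
      then obtain c where c: "c < p" "E 0 0 0 i' j' = Hf c" using xe E_cm1 unfolding H_def by auto
      have "x = E 0 (c*i) (c*j) a b" unfolding xe(1) using E_inj[OF c(2)[unfolded Hf_def]]
        by (intro E_cong) simp_all
      hence "x = Pf (c, a, b)" unfolding Pf_def by simp
      moreover have "(c, a, b) \<in> {..<p} \<times> {..<p} \<times> {..<p}" using c xe by simp
      ultimately show "x \<in> Pf ` ({..<p} \<times> {..<p} \<times> {..<p})" by (rule image_eqI)
    qed
    show "Pf ` ({..<p} \<times> {..<p} \<times> {..<p}) \<subseteq> PP H"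
    proof
      fix x assume "x \<in> Pf ` ({..<p} \<times> {..<p} \<times> {..<p})"
      then obtain c a b where x: "x = E 0 (c*i) (c*j) a b" unfolding Pf_def by auto
      have h1: "cm x a1 \<in> H" using x E_cm1 Hall unfolding Hf_def by simp
      have hd: "int p dvd (int m * l ^ 2 + int n * l * u - u ^ 2)" using h by (simp add: dvd_eq_mod_eq_0)
      obtain c' where c': "int p dvd (c' * int i - int m * int c * l)"
          "int p dvd (c' * l - (int c * int i + int n * int c * l))"
        using NT2[OF pr l hd it] by blast
      define c'' where "c'' = nat (c' mod int p)"
      define d where "d = c' div int p"
      have cc: "int c'' = c' - int p * d" unfolding c''_def d_def using p0
        using minus_mult_div_eq_mod[of c' "int p"] by simp
      have c'e: "c' = int c'' + int p * d" using cc by simp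
      have "int p dvd (int (c''*i) - int (m*(c*j)))"
      proof -
        have "int (c''*i) - int (m*(c*j)) = (c' * int i - int m * int c * l) - int p * (d * int i)"
          unfolding c'e ji[symmetric] by (simp add: algebra_simps)
        thus ?thesis using c'(1) by simp
      qed
      moreover have "int p dvd (int (c''*j) - int (c*i+n*(c*j)))"
      proof -
        have eq2: "int (c''*j) - int (c*i+n*(c*j)) = (c' * l - (int c * int i + int n * int c * l)) - int p * (d * l)"
          unfolding c'e ji[symmetric] by (simp add: algebra_simps)
        show ?thesis unfolding eq2 by (rule dvd_diff[OF c'(2)]) simp
      qed
      ultimately have "Hf c'' = E 0 0 0 (m*(c*j)) (c*i+n*(c*j))" unfolding Hf_def
        by (intro E_cong) (simp_all add: natcong)
      hence h2: "cm x a2 \<in> H" using x E_cm2 Hall[of c''] by simp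
      show "x \<in> PP H" using PP_gen[OF Hsub Hcent _ h1 h2] x by simp
    qed
  qed
  have injP: "inj_on Pf ({..<p} \<times> {..<p} \<times> {..<p})"
  proof (rule inj_onI)
    fix x y assume x: "x \<in> {..<p} \<times> {..<p} \<times> {..<p}" and y: "y \<in> {..<p} \<times> {..<p} \<times> {..<p}"
      and eq: "Pf x = Pf y"
    obtain c a b where xd: "x = (c,a,b)" using prod_cases3 by blast
    obtain c' a' b' where yd: "y = (c',a',b')" using prod_cases3 by blast
    have E: "E 0 (c*i) (c*j) a b = E 0 (c'*i) (c'*j) a' b'" using eq xd yd unfolding Pf_def by simp
    have "Hf c = Hf c'" unfolding Hf_def using E_inj[OF E] by (intro E_cong) simp_all
    hence "c = c'" using injH x y xd yd unfolding inj_on_def by auto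
    moreover have "a = a'" "b = b'" using E_inj[OF E] x y xd yd by auto
    ultimately show "x = y" using xd yd by simp
  qed
  have cP: "card (PP H) = p ^ 3" unfolding PPeq using card_image[OF injP]
    by (simp add: card_cartesian_product eval_nat_numeral)
  have "card (grp_center (G Mod H)) * p = p * p ^ 2" using card_center_quot[OF Hsub Hcent] cH cP
    by (simp add: eval_nat_numeral)
  hence "card (grp_center (G Mod H)) = p ^ 2" using p_gt1 by simp
  thus ?thesis using Hsub Hcent cH center_cent by blast
qed

lemma main: "(\<exists>H. subgroup H G \<and> H \<subseteq> grp_center G \<and> card H = p \<and>
              card (grp_center (G Mod H)) = p ^ 2)
     \<longleftrightarrow> (\<exists>l u :: int. 0 < l \<and> l < int p \<and> 0 \<le> u \<and> u < int p \<and>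
              (int m * l ^ 2 + int n * l * u - u ^ 2) mod int p = 0)"
proof
  assume "\<exists>H. subgroup H G \<and> H \<subseteq> grp_center G \<and> card H = p \<and> card (grp_center (G Mod H)) = p ^ 2"
  then obtain H where H: "subgroup H G" "H \<subseteq> grp_center G" "card H = p"
    "card (grp_center (G Mod H)) = p ^ 2" by auto
  have "H \<subseteq> Collect cent" using H(2) center_cent by simp
  thus "\<exists>l u :: int. 0 < l \<and> l < int p \<and> 0 \<le> u \<and> u < int p \<and>
              (int m * l ^ 2 + int n * l * u - u ^ 2) mod int p = 0"
    by (rule dir1[OF H(1) _ H(3) H(4)])
next
  assume "\<exists>l u :: int. 0 < l \<and> l < int p \<and> 0 \<le> u \<and> u < int p \<and>
              (int m * l ^ 2 + int n * l * u - u ^ 2) mod int p = 0"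
  then obtain l u :: int where lu: "0 < l" "l < int p" "0 \<le> u" "u < int p"
     "(int m * l ^ 2 + int n * l * u - u ^ 2) mod int p = 0" by auto
  show "\<exists>H. subgroup H G \<and> H \<subseteq> grp_center G \<and> card H = p \<and> card (grp_center (G Mod H)) = p ^ 2"
    by (rule dir2[OF lu])
qed

end

theorem lemma4p2:
  fixes G (structure) and p :: nat and a1 a2 :: 'a and m n :: nat
  assumes "group G" and "Factorial_Ring.prime p"
    and "finite (carrier G)" and "card (carrier G) = p ^ 7"
    and "nilpotency_class G 4"
    and "elem_abelian G p (lower_central G 2)"
    and "card (lower_central G 2) = p ^ 5"
    and "a1 \<in> carrier G" and "a2 \<in> carrier G"
    and "generate G {a1, a2} = carrier G"
    and "lower_central G 4 =
           generate G {grp_comm G (grp_comm G (grp_comm G a1 a2) a1) a1,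
                       grp_comm G (grp_comm G (grp_comm G a1 a2) a1) a2}"
    and "m < p" and "n < p" and "m \<noteq> 0 \<or> n \<noteq> 0"
    and "grp_comm G (grp_comm G (grp_comm G a1 a2) a2) a2 =
           grp_comm G (grp_comm G (grp_comm G a1 a2) a1) a1 [^] m \<otimes>
           grp_comm G (grp_comm G (grp_comm G a1 a2) a1) a2 [^] n"
  shows "(\<exists>H. subgroup H G \<and> H \<subseteq> grp_center G \<and> card H = p \<and>
              card (grp_center (G Mod H)) = p ^ 2)
     \<longleftrightarrow> (\<exists>l u :: int. 0 < l \<and> l < int p \<and> 0 \<le> u \<and> u < int p \<and>
              (int m * l ^ 2 + int n * l * u - u ^ 2) mod int p = 0)"
proof -
  have g5: "lower_central G 5 = {\<one>}"
    using assms(5) unfolding nilpotency_class_def by (simp add: eval_nat_numeral)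
  have "L G p a1 a2 m n"
    by (rule L.intro[OF assms(1)], unfold_locales) (use assms g5 in auto)
  thus ?thesis by (rule L.main)
qed


end
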